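(* Let $\Sigma$ be an alphabet with $|\Sigma|=2$. For every antimorphic involution $\theta$ on $\Sigma^*$, there is no infinite word over $\Sigma$ that is pseudo-cube-free with respect to $\theta$.
   Context: A function $\theta:\Sigma^*\to\Sigma^*$ is an antimorphic involution if $\theta(uv)=\theta(v)\theta(u)$ and $\theta(\theta(w))=w$. A pseudo cube with respect to $\theta$ is a nonempty word $u_1u_2u_3$ such that for all $1\le i,j\le 3$, $u_i=u_j$ or $u_i=\theta(u_j)$. A word is pseudo-cube-free with respect to $\theta$ if no factor (contiguous subword) of it is a pseudo cube. *)

theory Defs
  imports Main "HOL-Library.Cardinality"
begin

definition antimorphic_involution :: "('a list \<Rightarrow> 'a list) \<Rightarrow> bool" where
  "antimorphic_involution \<theta> \<longleftrightarrow>
     (\<forall>u v. \<theta> (u @ v) = \<theta> v @ \<theta> u) \<and> (\<forall>w. \<theta> (\<theta> w) = w)"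

definition pseudo_cube :: "('a list \<Rightarrow> 'a list) \<Rightarrow> 'a list \<Rightarrow> bool" where
  "pseudo_cube \<theta> x \<longleftrightarrow> x \<noteq> [] \<and>
     (\<exists>u1 u2 u3. x = u1 @ u2 @ u3 \<and>
        (\<forall>i<3. \<forall>j<3. [u1,u2,u3] ! i = [u1,u2,u3] ! j \<or> [u1,u2,u3] ! i = \<theta> ([u1,u2,u3] ! j)))"

definition inf_factor :: "'a list \<Rightarrow> (nat \<Rightarrow> 'a) \<Rightarrow> bool" where
  "inf_factor x w \<longleftrightarrow> (\<exists>i j. i \<le> j \<and> x = map w [i..<j])"

definition inf_pseudo_cube_free :: "('a list \<Rightarrow> 'a list) \<Rightarrow> (nat \<Rightarrow> 'a) \<Rightarrow> bool" where
  "inf_pseudo_cube_free \<theta> w \<longleftrightarrow> (\<forall>x. inf_factor x w \<longrightarrow> \<not> pseudo_cube \<theta> x)"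

end

theory Submission
  imports Defs
begin

definition blk :: "(nat \<Rightarrow> 'a) \<Rightarrow> nat \<Rightarrow> nat \<Rightarrow> 'a list" where
 "blk w i k = map w [i..<i+k]"

definition good where "good w i k \<longleftrightarrow> 0<k \<and> (blk w (i+k) k = blk w i k \<or> blk w (i+k) k = rev (blk w i k))
   \<and> (blk w (i+2*k) k = blk w i k \<or> blk w (i+2*k) k = rev (blk w i k))"

lemma blk1: "blk w i 1 = [w i]" by (simp add: blk_def)

lemma ai_nil:
  assumes "antimorphic_involution \<theta>" shows "\<theta> [] = []"
proof -
  have "\<theta> ([] @ []) = \<theta> [] @ \<theta> []" using assms unfolding antimorphic_involution_def by blast
  then have "length (\<theta> []) = length (\<theta> []) + length (\<theta> [])" by (metis append_Nil length_append)
  then show ?thesis by simp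
qed

lemma ai_letter_ne:
  assumes "antimorphic_involution \<theta>" shows "\<theta> [c] \<noteq> []"
proof
  assume "\<theta> [c] = []"
  then have "\<theta> (\<theta> [c]) = []" using ai_nil[OF assms] by simp
  moreover have "\<theta> (\<theta> [c]) = [c]" using assms unfolding antimorphic_involution_def by blast
  ultimately show False by simp
qed

lemma ai_len:
  assumes "antimorphic_involution \<theta>" shows "length v \<le> length (\<theta> v)"
proof (induction v)
  case Nil then show ?case by simp
next
  case (Cons x v)
  have "\<theta> ([x] @ v) = \<theta> v @ \<theta> [x]" using assms unfolding antimorphic_involution_def by blast
  then have "length (\<theta> (x # v)) = length (\<theta> v) + length (\<theta> [x])" by simp
  moreover have "length (\<theta> [x]) \<ge> 1" using ai_letter_ne[OF assms, of x] by (cases "\<theta> [x]") auto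
  ultimately show ?case using Cons by simp
qed

lemma ai_letter:
  assumes "antimorphic_involution \<theta>" shows "\<theta> [c] = [hd (\<theta> [c])]"
proof -
  have "\<theta> (\<theta> [c]) = [c]" using assms unfolding antimorphic_involution_def by blast
  then have "length (\<theta> [c]) \<le> 1" using ai_len[OF assms, of "\<theta> [c]"] by simp
  with ai_letter_ne[OF assms, of c] show ?thesis by (cases "\<theta> [c]") auto
qed

lemma ai_rev:
  assumes "antimorphic_involution \<theta>" shows "\<theta> v = rev (map (\<lambda>c. hd (\<theta> [c])) v)"
proof (induction v)
  case Nil then show ?case using ai_nil[OF assms] by simp
next
  case (Cons x v)
  have "\<theta> ([x] @ v) = \<theta> v @ \<theta> [x]" using assms unfolding antimorphic_involution_def by blast
  then show ?case using Cons ai_letter[OF assms, of x] by simp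
qed

lemma blocks_pc:
  assumes inv: "antimorphic_involution \<theta>" and k: "0 < k"
    and h1: "blk w (i+k) k = blk w i k \<or> blk w (i+k) k = \<theta> (blk w i k)"
    and h2: "blk w (i+2*k) k = blk w i k \<or> blk w (i+2*k) k = \<theta> (blk w i k)"
  shows "\<not> inf_pseudo_cube_free \<theta> w"
proof -
  define u1 where "u1 = blk w i k"
  define u2 where "u2 = blk w (i+k) k"
  define u3 where "u3 = blk w (i+2*k) k"
  have tt: "\<And>v. \<theta> (\<theta> v) = v" using inv unfolding antimorphic_involution_def by blast
  have x: "map w [i..<i+3*k] = u1 @ u2 @ u3"
  proof -
    have e1: "[i..<i+3*k] = [i..<i+k] @ [i+k..<i+3*k]"
      using upt_add_eq_append[of i "i+k" "2*k"] by (simp add: add.assoc)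
    have e2: "[i+k..<i+3*k] = [i+k..<i+2*k] @ [i+2*k..<i+2*k+k]"
      using upt_add_eq_append[of "i+k" "i+2*k" k] by (simp add: add.assoc)
    have "[i..<i+3*k] = [i..<i+k] @ [i+k..<i+k+k] @ [i+2*k..<i+2*k+k]"
      using e1 e2 by (simp add: mult_2 add.assoc)
    then show ?thesis unfolding u1_def u2_def u3_def blk_def by simp
  qed
  have ne: "map w [i..<i+3*k] \<noteq> []" using k by simp
  have mem: "\<And>t. t < 3 \<Longrightarrow> [u1,u2,u3] ! t = u1 \<or> [u1,u2,u3] ! t = \<theta> u1"
  proof -
    fix t :: nat assume "t < 3"
    then have "t = 0 \<or> t = 1 \<or> t = 2" by auto
    then show "[u1,u2,u3] ! t = u1 \<or> [u1,u2,u3] ! t = \<theta> u1"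
      using h1 h2 unfolding u1_def u2_def u3_def by auto
  qed
  have all: "\<forall>a<3. \<forall>b<3. [u1,u2,u3] ! a = [u1,u2,u3] ! b \<or> [u1,u2,u3] ! a = \<theta> ([u1,u2,u3] ! b)"
  proof (intro allI impI)
    fix a b :: nat assume "a < 3" "b < 3"
    then show "[u1,u2,u3] ! a = [u1,u2,u3] ! b \<or> [u1,u2,u3] ! a = \<theta> ([u1,u2,u3] ! b)"
      using mem[of a] mem[of b] tt by metis
  qed
  have pc: "pseudo_cube \<theta> (map w [i..<i+3*k])"
    unfolding pseudo_cube_def using ne x all by blast
  have "inf_factor (map w [i..<i+3*k]) w" unfolding inf_factor_def by (rule exI[of _ i], rule exI[of _ "i+3*k"]) simp
  then show ?thesis using pc unfolding inf_pseudo_cube_free_def by blast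
qed

lemma blk2: "blk w i 2 = [w i, w (i+1)]" by (simp add: blk_def numeral_2_eq_2 upt_conv_Cons)
lemma blk3: "blk w i 3 = [w i, w (i+1), w (i+2)]" by (simp add: blk_def numeral_3_eq_3 upt_conv_Cons)

lemma bools: fixes ya yb yc yd ye yf yg yh yi yj :: bool
  shows "(((yb = ya) \<or> (yb = ya)) \<and> ((yc = ya) \<or> (yc = ya)))
   \<or> (((yc = yb) \<or> (yc = yb)) \<and> ((yd = yb) \<or> (yd = yb)))
   \<or> (((yd = yc) \<or> (yd = yc)) \<and> ((ye = yc) \<or> (ye = yc)))
   \<or> (((ye = yd) \<or> (ye = yd)) \<and> ((yf = yd) \<or> (yf = yd)))
   \<or> (((yf = ye) \<or> (yf = ye)) \<and> ((yg = ye) \<or> (yg = ye)))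
   \<or> (((yg = yf) \<or> (yg = yf)) \<and> ((yh = yf) \<or> (yh = yf)))
   \<or> (((yh = yg) \<or> (yh = yg)) \<and> ((yi = yg) \<or> (yi = yg)))
   \<or> (((yi = yh) \<or> (yi = yh)) \<and> ((yj = yh) \<or> (yj = yh)))
   \<or> (((yc = ya \<and> yd = yb) \<or> (yc = yb \<and> yd = ya)) \<and> ((ye = ya \<and> yf = yb) \<or> (ye = yb \<and> yf = ya)))
   \<or> (((yd = yb \<and> ye = yc) \<or> (yd = yc \<and> ye = yb)) \<and> ((yf = yb \<and> yg = yc) \<or> (yf = yc \<and> yg = yb)))
   \<or> (((ye = yc \<and> yf = yd) \<or> (ye = yd \<and> yf = yc)) \<and> ((yg = yc \<and> yh = yd) \<or> (yg = yd \<and> yh = yc)))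
   \<or> (((yf = yd \<and> yg = ye) \<or> (yf = ye \<and> yg = yd)) \<and> ((yh = yd \<and> yi = ye) \<or> (yh = ye \<and> yi = yd)))
   \<or> (((yg = ye \<and> yh = yf) \<or> (yg = yf \<and> yh = ye)) \<and> ((yi = ye \<and> yj = yf) \<or> (yi = yf \<and> yj = ye)))
   \<or> (((yd = ya \<and> ye = yb \<and> yf = yc) \<or> (yd = yc \<and> ye = yb \<and> yf = ya)) \<and> ((yg = ya \<and> yh = yb \<and> yi = yc) \<or> (yg = yc \<and> yh = yb \<and> yi = ya)))
   \<or> (((ye = yb \<and> yf = yc \<and> yg = yd) \<or> (ye = yd \<and> yf = yc \<and> yg = yb)) \<and> ((yh = yb \<and> yi = yc \<and> yj = yd) \<or> (yh = yd \<and> yi = yc \<and> yj = yb)))"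
  by (cases ya; cases yb; cases yc; cases yd; cases ye; cases yf; cases yg; cases yh; cases yi; cases yj; simp)

lemma bools_good:
  fixes x :: "nat \<Rightarrow> bool"
  shows "\<exists>i k. i+3*k \<le> 10 \<and> good x i k"
proof -
  have g0: "(((x 1 = x 0) \<or> (x 1 = x 0)) \<and> ((x 2 = x 0) \<or> (x 2 = x 0))) \<Longrightarrow> good x 0 1" unfolding good_def blk1 blk2 blk3 by (auto simp add: numeral_eq_Suc)
  have g1: "(((x 2 = x 1) \<or> (x 2 = x 1)) \<and> ((x 3 = x 1) \<or> (x 3 = x 1))) \<Longrightarrow> good x 1 1" unfolding good_def blk1 blk2 blk3 by (auto simp add: numeral_eq_Suc)
  have g2: "(((x 3 = x 2) \<or> (x 3 = x 2)) \<and> ((x 4 = x 2) \<or> (x 4 = x 2))) \<Longrightarrow> good x 2 1" unfolding good_def blk1 blk2 blk3 by (auto simp add: numeral_eq_Suc)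
  have g3: "(((x 4 = x 3) \<or> (x 4 = x 3)) \<and> ((x 5 = x 3) \<or> (x 5 = x 3))) \<Longrightarrow> good x 3 1" unfolding good_def blk1 blk2 blk3 by (auto simp add: numeral_eq_Suc)
  have g4: "(((x 5 = x 4) \<or> (x 5 = x 4)) \<and> ((x 6 = x 4) \<or> (x 6 = x 4))) \<Longrightarrow> good x 4 1" unfolding good_def blk1 blk2 blk3 by (auto simp add: numeral_eq_Suc)
  have g5: "(((x 6 = x 5) \<or> (x 6 = x 5)) \<and> ((x 7 = x 5) \<or> (x 7 = x 5))) \<Longrightarrow> good x 5 1" unfolding good_def blk1 blk2 blk3 by (auto simp add: numeral_eq_Suc)
  have g6: "(((x 7 = x 6) \<or> (x 7 = x 6)) \<and> ((x 8 = x 6) \<or> (x 8 = x 6))) \<Longrightarrow> good x 6 1" unfolding good_def blk1 blk2 blk3 by (auto simp add: numeral_eq_Suc)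
  have g7: "(((x 8 = x 7) \<or> (x 8 = x 7)) \<and> ((x 9 = x 7) \<or> (x 9 = x 7))) \<Longrightarrow> good x 7 1" unfolding good_def blk1 blk2 blk3 by (auto simp add: numeral_eq_Suc)
  have g8: "(((x 2 = x 0 \<and> x 3 = x 1) \<or> (x 2 = x 1 \<and> x 3 = x 0)) \<and> ((x 4 = x 0 \<and> x 5 = x 1) \<or> (x 4 = x 1 \<and> x 5 = x 0))) \<Longrightarrow> good x 0 2" unfolding good_def blk1 blk2 blk3 by (auto simp add: numeral_eq_Suc)
  have g9: "(((x 3 = x 1 \<and> x 4 = x 2) \<or> (x 3 = x 2 \<and> x 4 = x 1)) \<and> ((x 5 = x 1 \<and> x 6 = x 2) \<or> (x 5 = x 2 \<and> x 6 = x 1))) \<Longrightarrow> good x 1 2" unfolding good_def blk1 blk2 blk3 by (auto simp add: numeral_eq_Suc)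
  have g10: "(((x 4 = x 2 \<and> x 5 = x 3) \<or> (x 4 = x 3 \<and> x 5 = x 2)) \<and> ((x 6 = x 2 \<and> x 7 = x 3) \<or> (x 6 = x 3 \<and> x 7 = x 2))) \<Longrightarrow> good x 2 2" unfolding good_def blk1 blk2 blk3 by (auto simp add: numeral_eq_Suc)
  have g11: "(((x 5 = x 3 \<and> x 6 = x 4) \<or> (x 5 = x 4 \<and> x 6 = x 3)) \<and> ((x 7 = x 3 \<and> x 8 = x 4) \<or> (x 7 = x 4 \<and> x 8 = x 3))) \<Longrightarrow> good x 3 2" unfolding good_def blk1 blk2 blk3 by (auto simp add: numeral_eq_Suc)
  have g12: "(((x 6 = x 4 \<and> x 7 = x 5) \<or> (x 6 = x 5 \<and> x 7 = x 4)) \<and> ((x 8 = x 4 \<and> x 9 = x 5) \<or> (x 8 = x 5 \<and> x 9 = x 4))) \<Longrightarrow> good x 4 2" unfolding good_def blk1 blk2 blk3 by (auto simp add: numeral_eq_Suc)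
  have g13: "(((x 3 = x 0 \<and> x 4 = x 1 \<and> x 5 = x 2) \<or> (x 3 = x 2 \<and> x 4 = x 1 \<and> x 5 = x 0)) \<and> ((x 6 = x 0 \<and> x 7 = x 1 \<and> x 8 = x 2) \<or> (x 6 = x 2 \<and> x 7 = x 1 \<and> x 8 = x 0))) \<Longrightarrow> good x 0 3" unfolding good_def blk1 blk2 blk3 by (auto simp add: numeral_eq_Suc)
  have g14: "(((x 4 = x 1 \<and> x 5 = x 2 \<and> x 6 = x 3) \<or> (x 4 = x 3 \<and> x 5 = x 2 \<and> x 6 = x 1)) \<and> ((x 7 = x 1 \<and> x 8 = x 2 \<and> x 9 = x 3) \<or> (x 7 = x 3 \<and> x 8 = x 2 \<and> x 9 = x 1))) \<Longrightarrow> good x 1 3" unfolding good_def blk1 blk2 blk3 by (auto simp add: numeral_eq_Suc)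
  have h0: "(((x 1 = x 0) \<or> (x 1 = x 0)) \<and> ((x 2 = x 0) \<or> (x 2 = x 0))) \<Longrightarrow> \<exists>i k. i+3*k \<le> 10 \<and> good x i k" by (drule g0, rule exI[of _ 0], rule exI[of _ 1], simp)
  have h1: "(((x 2 = x 1) \<or> (x 2 = x 1)) \<and> ((x 3 = x 1) \<or> (x 3 = x 1))) \<Longrightarrow> \<exists>i k. i+3*k \<le> 10 \<and> good x i k" by (drule g1, rule exI[of _ 1], rule exI[of _ 1], simp)
  have h2: "(((x 3 = x 2) \<or> (x 3 = x 2)) \<and> ((x 4 = x 2) \<or> (x 4 = x 2))) \<Longrightarrow> \<exists>i k. i+3*k \<le> 10 \<and> good x i k" by (drule g2, rule exI[of _ 2], rule exI[of _ 1], simp)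
  have h3: "(((x 4 = x 3) \<or> (x 4 = x 3)) \<and> ((x 5 = x 3) \<or> (x 5 = x 3))) \<Longrightarrow> \<exists>i k. i+3*k \<le> 10 \<and> good x i k" by (drule g3, rule exI[of _ 3], rule exI[of _ 1], simp)
  have h4: "(((x 5 = x 4) \<or> (x 5 = x 4)) \<and> ((x 6 = x 4) \<or> (x 6 = x 4))) \<Longrightarrow> \<exists>i k. i+3*k \<le> 10 \<and> good x i k" by (drule g4, rule exI[of _ 4], rule exI[of _ 1], simp)
  have h5: "(((x 6 = x 5) \<or> (x 6 = x 5)) \<and> ((x 7 = x 5) \<or> (x 7 = x 5))) \<Longrightarrow> \<exists>i k. i+3*k \<le> 10 \<and> good x i k" by (drule g5, rule exI[of _ 5], rule exI[of _ 1], simp)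
  have h6: "(((x 7 = x 6) \<or> (x 7 = x 6)) \<and> ((x 8 = x 6) \<or> (x 8 = x 6))) \<Longrightarrow> \<exists>i k. i+3*k \<le> 10 \<and> good x i k" by (drule g6, rule exI[of _ 6], rule exI[of _ 1], simp)
  have h7: "(((x 8 = x 7) \<or> (x 8 = x 7)) \<and> ((x 9 = x 7) \<or> (x 9 = x 7))) \<Longrightarrow> \<exists>i k. i+3*k \<le> 10 \<and> good x i k" by (drule g7, rule exI[of _ 7], rule exI[of _ 1], simp)
  have h8: "(((x 2 = x 0 \<and> x 3 = x 1) \<or> (x 2 = x 1 \<and> x 3 = x 0)) \<and> ((x 4 = x 0 \<and> x 5 = x 1) \<or> (x 4 = x 1 \<and> x 5 = x 0))) \<Longrightarrow> \<exists>i k. i+3*k \<le> 10 \<and> good x i k" by (drule g8, rule exI[of _ 0], rule exI[of _ 2], simp)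
  have h9: "(((x 3 = x 1 \<and> x 4 = x 2) \<or> (x 3 = x 2 \<and> x 4 = x 1)) \<and> ((x 5 = x 1 \<and> x 6 = x 2) \<or> (x 5 = x 2 \<and> x 6 = x 1))) \<Longrightarrow> \<exists>i k. i+3*k \<le> 10 \<and> good x i k" by (drule g9, rule exI[of _ 1], rule exI[of _ 2], simp)
  have h10: "(((x 4 = x 2 \<and> x 5 = x 3) \<or> (x 4 = x 3 \<and> x 5 = x 2)) \<and> ((x 6 = x 2 \<and> x 7 = x 3) \<or> (x 6 = x 3 \<and> x 7 = x 2))) \<Longrightarrow> \<exists>i k. i+3*k \<le> 10 \<and> good x i k" by (drule g10, rule exI[of _ 2], rule exI[of _ 2], simp)
  have h11: "(((x 5 = x 3 \<and> x 6 = x 4) \<or> (x 5 = x 4 \<and> x 6 = x 3)) \<and> ((x 7 = x 3 \<and> x 8 = x 4) \<or> (x 7 = x 4 \<and> x 8 = x 3))) \<Longrightarrow> \<exists>i k. i+3*k \<le> 10 \<and> good x i k" by (drule g11, rule exI[of _ 3], rule exI[of _ 2], simp)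
  have h12: "(((x 6 = x 4 \<and> x 7 = x 5) \<or> (x 6 = x 5 \<and> x 7 = x 4)) \<and> ((x 8 = x 4 \<and> x 9 = x 5) \<or> (x 8 = x 5 \<and> x 9 = x 4))) \<Longrightarrow> \<exists>i k. i+3*k \<le> 10 \<and> good x i k" by (drule g12, rule exI[of _ 4], rule exI[of _ 2], simp)
  have h13: "(((x 3 = x 0 \<and> x 4 = x 1 \<and> x 5 = x 2) \<or> (x 3 = x 2 \<and> x 4 = x 1 \<and> x 5 = x 0)) \<and> ((x 6 = x 0 \<and> x 7 = x 1 \<and> x 8 = x 2) \<or> (x 6 = x 2 \<and> x 7 = x 1 \<and> x 8 = x 0))) \<Longrightarrow> \<exists>i k. i+3*k \<le> 10 \<and> good x i k" by (drule g13, rule exI[of _ 0], rule exI[of _ 3], simp)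
  have h14: "(((x 4 = x 1 \<and> x 5 = x 2 \<and> x 6 = x 3) \<or> (x 4 = x 3 \<and> x 5 = x 2 \<and> x 6 = x 1)) \<and> ((x 7 = x 1 \<and> x 8 = x 2 \<and> x 9 = x 3) \<or> (x 7 = x 3 \<and> x 8 = x 2 \<and> x 9 = x 1))) \<Longrightarrow> \<exists>i k. i+3*k \<le> 10 \<and> good x i k" by (drule g14, rule exI[of _ 1], rule exI[of _ 3], simp)
  show ?thesis
    using bools[where ya="x 0" and yb="x 1" and yc="x 2" and yd="x 3" and ye="x 4" and yf="x 5" and yg="x 6" and yh="x 7" and yi="x 8" and yj="x 9"]
    apply (elim disjE)
    apply (erule h0)
    apply (erule h1)
    apply (erule h2)
    apply (erule h3)
    apply (erule h4)
    apply (erule h5)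
    apply (erule h6)
    apply (erule h7)
    apply (erule h8)
    apply (erule h9)
    apply (erule h10)
    apply (erule h11)
    apply (erule h12)
    apply (erule h13)
    apply (erule h14)
    done
qed


theorem mainTheorem10:
  fixes \<theta> :: "'a list \<Rightarrow> 'a list"
  assumes "CARD('a) = 2"
    and "antimorphic_involution \<theta>"
  shows "\<not> (\<exists>w :: nat \<Rightarrow> 'a. inf_pseudo_cube_free \<theta> w)"
proof
  assume "\<exists>w :: nat \<Rightarrow> 'a. inf_pseudo_cube_free \<theta> w"
  then obtain w :: "nat \<Rightarrow> 'a" where free: "inf_pseudo_cube_free \<theta> w" by blast
  note inv = assms(2)
  define g where "g = (\<lambda>c. hd (\<theta> [c]))"
  have thg: "\<And>v. \<theta> v = rev (map g v)" unfolding g_def by (rule ai_rev[OF inv])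
  have tt: "\<And>v. \<theta> (\<theta> v) = v" using inv unfolding antimorphic_involution_def by blast
  have gg: "\<And>c. g (g c) = c" using tt[of "[c]" for c] thg by simp
  have "card (UNIV :: 'a set) = 2" using assms(1) by simp
  then obtain c0 c1 :: 'a where U: "UNIV = {c0, c1}" and d: "c0 \<noteq> c1" by (meson card_2_iff)
  have two: "\<And>z::'a. z = c0 \<or> z = c1" using U by blast
  show False
  proof (cases "\<exists>c. g c \<noteq> c")
    case True
    have ng: "\<And>y. g y \<noteq> y" using True two gg d by metis
    have L: "\<And>n. [w n] = [w 0] \<or> [w n] = \<theta> [w 0]"
    proof -
      fix n
      have t0: "\<theta> [w 0] = [g (w 0)]" using thg[of "[w 0]"] by simp
      have "w n = w 0 \<or> w n = g (w 0)"
        using ng[of "w 0"] two[of "w 0"] two[of "w n"] two[of "g (w 0)"] by auto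
      then show "[w n] = [w 0] \<or> [w n] = \<theta> [w 0]" using t0 by auto
    qed
    have "\<not> inf_pseudo_cube_free \<theta> w"
      apply (rule blocks_pc[OF inv, of 1 w 0])
      using L[of 1] L[of 2] by (simp_all add: blk_def numeral_eq_Suc)
    then show False using free by simp
  next
    case False
    then have "g = id" by auto
    then have th: "\<And>v. \<theta> v = rev v" using thg by simp
    define x where "x = (\<lambda>n. w n = c0)"
    define h where "h = (\<lambda>b. if b then c0 else c1)"
    have wx: "w = (\<lambda>n. h (x n))" unfolding x_def h_def using two by (auto intro!: ext) (metis two)
    obtain i k where "good x i k" using bools_good[of x] by blast
    then have gk: "0 < k" "blk x (i+k) k = blk x i k \<or> blk x (i+k) k = rev (blk x i k)"
      "blk x (i+2*k) k = blk x i k \<or> blk x (i+2*k) k = rev (blk x i k)" unfolding good_def by auto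
    have bm: "\<And>j. blk w j k = map h (blk x j k)" unfolding blk_def wx by simp
    have "\<not> inf_pseudo_cube_free \<theta> w"
      apply (rule blocks_pc[OF inv gk(1), where i=i])
      using gk(2,3) by (auto simp: bm th rev_map)
    then show False using free by simp
  qed
qed

end
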